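(* Let $X=\{X_t\}_{t\geq0}$ be a standard one-dimensional Brownian motion starting at $0$ on a probability space $(\Omega,\mathcal{F},\mathbb{P})$. Let $p$ be an atomic proposition interpreted by $B_p=[1,\infty)$, i.e. $X(\omega),t\models p$ iff $X_t(\omega)\geq1$ (and likewise for the discrete semantics). Define $\phi_1:=\Box_{(1,2)}(\Diamond_{(1,4)}p\wedge\lnot\Diamond_{(1,3)}p)$, $\phi_2:=(\Diamond_{(1,3)}\phi_1)\wedge(\lnot\Diamond_{(1,2)}\phi_1)\wedge(\lnot\Diamond_{(2,3)}\phi_1)$, $\phi_3:=\Diamond_{(1,2)}\phi_2$, $\psi:=(\lnot p)\wedge(\lnot\Diamond_{(0,8)}p)\wedge\phi_3$. Then $\mathbb{P}(\omega : X(\omega),0\models_n\psi)$ does not converge to $\mathbb{P}(\omega : X(\omega),0\models\psi)$ as $n\to\infty$.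
   Context: Continuous semantics for $t\geq0$: $X(\omega),t\models p$ iff $X_t(\omega)\in B_p$; negation and conjunction are interpreted classically; $X(\omega),t\models\Diamond_I\phi$ iff there exists $s\in I$ with $X(\omega),t+s\models\phi$; $\Box_I\phi:=\lnot\Diamond_I\lnot\phi$, so $X(\omega),t\models\Box_I\phi$ iff $X(\omega),t+s\models\phi$ for all $s\in I$. Discrete semantics: for $n\in\mathbb{N}$ let $\mathbb{N}/n=\{k/n:k\in\mathbb{N}\}$; for $t\in\mathbb{N}/n$, $X(\omega),t\models_n p$ iff $X_t(\omega)\in B_p$; negation and conjunction classical; $X(\omega),t\models_n\Diamond_I\phi$ iff there exists $s\in I\cap\mathbb{N}/n$ with $X(\omega),t+s\models_n\phi$; $X(\omega),t\models_n\Box_I\phi$ iff $X(\omega),t+s\models_n\phi$ for all $s\in I\cap\mathbb{N}/n$. *)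

theory Defs
  imports "HOL-Probability.Probability"
begin

text \<open>Standard one-dimensional Brownian motion started at 0 on the probability space M:
  X 0 = 0, continuous sample paths on [0,inf), Gaussian increments
  X t - X s ~ N(0, t - s) for 0 <= s < t, and independent increments.
  Values of X at negative times are irrelevant.\<close>
definition brownian_motion :: "'a measure \<Rightarrow> (real \<Rightarrow> 'a \<Rightarrow> real) \<Rightarrow> bool" where
  "brownian_motion M X \<longleftrightarrow>
     prob_space M \<and>
     (\<forall>t\<ge>0. X t \<in> borel_measurable M) \<and>
     (\<forall>\<omega>\<in>space M. X 0 \<omega> = 0) \<and>
     (\<forall>\<omega>\<in>space M. continuous_on {0..} (\<lambda>t. X t \<omega>)) \<and>
     (\<forall>s t. 0 \<le> s \<and> s < t \<longrightarrow>
        distributed M lborel (\<lambda>\<omega>. X t \<omega> - X s \<omega>)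
          (\<lambda>x. ennreal (normal_density 0 (sqrt (t - s)) x))) \<and>
     (\<forall>(n::nat) (ts::nat \<Rightarrow> real). 0 \<le> ts 0 \<and> (\<forall>i<n. ts i < ts (Suc i)) \<longrightarrow>
        prob_space.indep_vars M (\<lambda>_. borel) (\<lambda>i \<omega>. X (ts (Suc i)) \<omega> - X (ts i) \<omega>) {..<n})"

text \<open>Formulas of the (metric) temporal logic: atomic propositions are given directly by
  their interpreting sets B_p; Diamond I phi is the eventually operator with time interval I.\<close>
datatype mtl = Atom "real set" | Neg mtl | Conj mtl mtl | Dia "real set" mtl

definition Box :: "real set \<Rightarrow> mtl \<Rightarrow> mtl" where
  "Box I \<phi> = Neg (Dia I (Neg \<phi>))"

fun csat :: "(real \<Rightarrow> real) \<Rightarrow> real \<Rightarrow> mtl \<Rightarrow> bool" where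
  "csat f t (Atom B) = (f t \<in> B)"
| "csat f t (Neg \<phi>) = (\<not> csat f t \<phi>)"
| "csat f t (Conj \<phi> \<psi>) = (csat f t \<phi> \<and> csat f t \<psi>)"
| "csat f t (Dia I \<phi>) = (\<exists>s\<in>I. csat f (t + s) \<phi>)"

definition grid :: "nat \<Rightarrow> real set" where
  "grid n = {real k / real n | k. True}"

text \<open>Discrete semantics with resolution n (meant for t in N/n).\<close>
fun dsat :: "nat \<Rightarrow> (real \<Rightarrow> real) \<Rightarrow> real \<Rightarrow> mtl \<Rightarrow> bool" where
  "dsat n f t (Atom B) = (f t \<in> B)"
| "dsat n f t (Neg \<phi>) = (\<not> dsat n f t \<phi>)"
| "dsat n f t (Conj \<phi> \<psi>) = (dsat n f t \<phi> \<and> dsat n f t \<psi>)"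
| "dsat n f t (Dia I \<phi>) = (\<exists>s\<in>I \<inter> grid n. dsat n f (t + s) \<phi>)"

end

theory Submission
  imports Defs
begin

lemma grid_mem: "x \<in> grid n \<longleftrightarrow> (\<exists>k::nat. x = real k / real n)"
  by (auto simp: grid_def)

lemma grid_nat: "real k / real n \<in> grid n"
  by (auto simp: grid_def)

lemma grid_add: assumes "x \<in> grid n" "y \<in> grid n" shows "x + y \<in> grid n"
proof -
  obtain a b :: nat where a: "x = a / n" and b: "y = b / n" using assms by (auto simp: grid_mem)
  then have "x + y = real (a + b) / n" by (simp add: add_divide_distrib)
  then show ?thesis using grid_nat[of "a+b" n] by metis
qed

lemma grid_sub: assumes "0 < n" "x \<in> grid n" "y \<in> grid n" "y \<le> x" shows "x - y \<in> grid n"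
proof -
  obtain a b :: nat where a: "x = a / n" and b: "y = b / n" using assms by (auto simp: grid_mem)
  have "b \<le> a" using assms(1,4) a b by (simp add: divide_right_mono_neg) (auto simp: field_simps)
  then have "x - y = real (a - b) / n" using a b by (simp add: diff_divide_distrib of_nat_diff)
  then show ?thesis by (simp add: grid_nat)
qed

lemma grid_next: assumes "0 < n" "x \<in> grid n" "y \<in> grid n" "x < y" shows "x + 1 / n \<le> y"
proof -
  obtain a b :: nat where a: "x = a / n" and b: "y = b / n" using assms by (auto simp: grid_mem)
  have "a < b" using assms(1,4) a b by (auto simp: field_simps)
  then have "real a + 1 \<le> real b" by simp
  then have "(real a + 1) / n \<le> real b / n" using assms(1) by (simp add: divide_right_mono)
  then show ?thesis using a b by (simp add: add_divide_distrib)
qed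

lemma grid_nonneg: "x \<in> grid n \<Longrightarrow> 0 \<le> x"
  by (auto simp: grid_mem)

lemma grid_int: "0 < n \<Longrightarrow> real m \<in> grid n"
  using grid_nat[of "m * n" n] by simp

lemma grid_h: "1 / real n \<in> grid n"
  using grid_nat[of 1 n] by simp

definition dphi1 :: "nat \<Rightarrow> (real \<Rightarrow> real) \<Rightarrow> real \<Rightarrow> bool" where
  "dphi1 n f w \<longleftrightarrow> (\<forall>v\<in>{1<..<2} \<inter> grid n. (\<exists>r\<in>{1<..<4} \<inter> grid n. 1 \<le> f (w + v + r)) \<and>
      \<not> (\<exists>r\<in>{1<..<3} \<inter> grid n. 1 \<le> f (w + v + r)))"

lemma dsat_phi1:
  "dsat n f w (Box {1<..<2} (Conj (Dia {1<..<4} (Atom {1..})) (Neg (Dia {1<..<3} (Atom {1..}))))) = dphi1 n f w"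
  by (simp add: Box_def dphi1_def add.assoc)

lemma dsat_psi_false:
  fixes f :: "real \<Rightarrow> real"
  assumes n2: "2 \<le> n" and f0: "f 0 < 1"
    and phi1: "\<phi>1 = Box {1<..<2} (Conj (Dia {1<..<4} (Atom {1..})) (Neg (Dia {1<..<3} (Atom {1..}))))"
  shows "\<not> dsat n f 0 (Conj (Neg (Atom {1..})) (Conj (Neg (Dia {0<..<8} (Atom {1..})))
           (Dia {1<..<2} (Conj (Dia {1<..<3} \<phi>1) (Conj (Neg (Dia {1<..<2} \<phi>1)) (Neg (Dia {2<..<3} \<phi>1)))))))"
proof
  define h where "h = 1 / real n"
  have n0: "0 < n" using n2 by simp
  have h0: "0 < h" using n0 by (simp add: h_def)
  have hh: "h \<le> 1/2" using n2 by (simp add: h_def field_simps)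
  have hg: "h \<in> grid n" using grid_h by (simp add: h_def)
  have gi: "\<And>m. real m \<in> grid n" using grid_int[OF n0] .
  note gn = grid_next[OF n0, folded h_def]
  note gs = grid_sub[OF n0]
  assume D: "dsat n f 0 (Conj (Neg (Atom {1..})) (Conj (Neg (Dia {0<..<8} (Atom {1..})))
           (Dia {1<..<2} (Conj (Dia {1<..<3} \<phi>1) (Conj (Neg (Dia {1<..<2} \<phi>1)) (Neg (Dia {2<..<3} \<phi>1)))))))"
  then have no8: "\<And>g. g \<in> grid n \<Longrightarrow> 0 < g \<Longrightarrow> g < 8 \<Longrightarrow> f g < 1"
    by (auto simp: not_le)
  from D have "\<exists>s\<in>{1<..<2} \<inter> grid n. (\<exists>u\<in>{1<..<3} \<inter> grid n. dphi1 n f (s + u)) \<and>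
      (\<forall>u\<in>{1<..<2} \<inter> grid n. \<not> dphi1 n f (s + u)) \<and> (\<forall>u\<in>{2<..<3} \<inter> grid n. \<not> dphi1 n f (s + u))"
    by (simp add: phi1 dsat_phi1)
  then obtain s where sI: "s \<in> {1<..<2} \<inter> grid n"
     and rest: "(\<exists>u\<in>{1<..<3} \<inter> grid n. dphi1 n f (s + u)) \<and>
      (\<forall>u\<in>{1<..<2} \<inter> grid n. \<not> dphi1 n f (s + u)) \<and> (\<forall>u\<in>{2<..<3} \<inter> grid n. \<not> dphi1 n f (s + u))"
    by (rule bexE)
  have a: "\<exists>u\<in>{1<..<3} \<inter> grid n. dphi1 n f (s + u)"
     and b: "\<forall>u\<in>{1<..<2} \<inter> grid n. \<not> dphi1 n f (s + u)"
     and c: "\<forall>u\<in>{2<..<3} \<inter> grid n. \<not> dphi1 n f (s + u)"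
    using rest by simp_all
  have s: "s \<in> grid n" "1 < s" "s < 2" using sI by simp_all
  from a obtain u where uI: "u \<in> {1<..<3} \<inter> grid n" and u4: "dphi1 n f (s + u)" by (rule bexE)
  have u: "u \<in> grid n" "1 < u" "u < 3" using uI by simp_all
  have "u = 2"
  proof (rule ccontr)
    assume "u \<noteq> 2"
    then have "u < 2 \<or> 2 < u" by linarith
    then show False
    proof
      assume "u < 2" then have "u \<in> {1<..<2} \<inter> grid n" using u by simp
      with b have "\<not> dphi1 n f (s + u)" by (rule bspec)
      then show False using u4 by simp
    next
      assume "2 < u" then have "u \<in> {2<..<3} \<inter> grid n" using u by simp
      with c have "\<not> dphi1 n f (s + u)" by (rule bspec)
      then show False using u4 by simp
    qed
  qed
  with u4 have P2: "dphi1 n f (s + 2)" by simp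
  have v1: "1 + h \<in> {1<..<2} \<inter> grid n" using h0 hh grid_add[OF gi[of 1] hg] by auto
  have v2: "2 - h \<in> {1<..<2} \<inter> grid n" using h0 hh gs[OF gi[of 2] hg] by auto
  have v3: "2 + h \<in> {2<..<3} \<inter> grid n" using h0 hh grid_add[OF gi[of 2] hg] by auto
  have gv1: "1 + h \<in> grid n" and gv2: "2 - h \<in> grid n" and gv3: "2 + h \<in> grid n" using v1 v2 v3 by auto
  have sg: "s + 2 \<in> grid n" using grid_add[OF s(1) gi[of 2]] by auto
  from P2 v1 obtain r where r: "r \<in> {1<..<4} \<inter> grid n" "1 \<le> f (s + 2 + (1 + h) + r)"
    unfolding dphi1_def by blast
  have "s + 2 + (1 + h) + r \<in> grid n" using r(1) grid_add[OF grid_add[OF sg gv1]] by auto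
  then obtain k0 :: nat where k0: "s + 2 + (1 + h) + r = real k0 / n" by (auto simp: grid_mem)
  define K where "K = (LEAST k::nat. 1 \<le> f (real k / n))"
  define H where "H = real K / n"
  have "1 \<le> f (real k0 / n)" using r k0 by simp
  then have fH: "1 \<le> f H" unfolding H_def K_def by (rule LeastI)
  have Hg: "H \<in> grid n" by (simp add: H_def grid_nat)
  have below: "f g < 1" if gH: "g \<in> grid n" "g < H" for g
  proof -
    obtain k :: nat where k: "g = k / n" using gH by (auto simp: grid_mem)
    have "k < K" using gH(2) n0 unfolding k H_def by (simp add: divide_strict_right_mono_neg field_simps)
    then have "\<not> 1 \<le> f (real k / n)" unfolding K_def by (rule not_less_Least)
    then show ?thesis unfolding k by simp
  qed
  have H8: "8 \<le> H"
  proof (rule ccontr)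
    assume "\<not> 8 \<le> H"
    then have "H < 8" by simp
    moreover have "H \<noteq> 0" using fH f0 by auto
    then have "0 < H" using grid_nonneg[OF Hg] by simp
    ultimately have "f H < 1" using no8[OF Hg] by simp
    then show False using fH by simp
  qed
  have C1: "w + 5 - h \<le> H \<and> H \<le> w + 5" if w: "w \<in> grid n" "0 < w" "w \<le> 5" "dphi1 n f w" for w
  proof
    from w(4) v1 obtain r where r: "r \<in> {1<..<4} \<inter> grid n" "1 \<le> f (w + (1 + h) + r)"
      unfolding dphi1_def by blast
    have pg: "w + (1 + h) + r \<in> grid n" using r(1) grid_add[OF grid_add[OF w(1) gv1]] by auto
    have "H \<le> w + (1 + h) + r" using below[OF pg] r(2) by fastforce
    moreover have "r + h \<le> 4" using gn[of r 4] r gi[of 4] by auto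
    ultimately show "H \<le> w + 5" by simp
    show "w + 5 - h \<le> H"
    proof (rule ccontr)
      assume lt: "\<not> w + 5 - h \<le> H"
      show False
      proof (cases "H < w + 4 + h")
        case True
        define r' where "r' = H - w - (1 + h)"
        have "w + (1+h) \<in> grid n" using grid_add[OF w(1) gv1] by auto
        then have "r' \<in> grid n" unfolding r'_def using gs[OF Hg] H8 w hh h0 by (simp add: diff_diff_eq)
        moreover have "1 < r'" "r' < 3" using True H8 w hh unfolding r'_def by auto
        moreover have "w + (1 + h) + r' = H" unfolding r'_def by simp
        moreover have "\<not> (\<exists>r\<in>{1<..<3} \<inter> grid n. 1 \<le> f (w + (1 + h) + r))"
          using w(4) v1 unfolding dphi1_def by blast
        ultimately show False using fH by (metis IntI greaterThanLessThan_iff)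
      next
        case False
        define r' where "r' = H - w - (2 - h)"
        have "w + (2-h) \<in> grid n" using grid_add[OF w(1) gv2] by auto
        then have "r' \<in> grid n" unfolding r'_def using gs[OF Hg] H8 w hh h0 by (simp add: diff_diff_eq)
        moreover have "1 < r'" "r' < 3" using False lt H8 w hh h0 unfolding r'_def by auto
        moreover have "w + (2 - h) + r' = H" unfolding r'_def by simp
        moreover have "\<not> (\<exists>r\<in>{1<..<3} \<inter> grid n. 1 \<le> f (w + (2 - h) + r))"
          using w(4) v2 unfolding dphi1_def by blast
        ultimately show False using fH by (metis IntI greaterThanLessThan_iff)
      qed
    qed
  qed
  have C2: "dphi1 n f w" if w: "w \<in> grid n" "0 < w" "H = w + 5 - h \<or> H = w + 5" for w
    unfolding dphi1_def
  proof (intro ballI conjI)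
    fix v assume v: "v \<in> {1<..<2} \<inter> grid n"
    have vh: "v \<le> 2 - h" using gn[of v 2] v gi[of 2] by auto
    have wv: "w + v \<in> grid n" using v grid_add[OF w(1)] by auto
    have "H - (w + v) \<in> grid n" using gs[OF Hg wv] w vh v h0 by auto
    moreover have "1 < H - (w + v)" "H - (w + v) < 4" using w vh v h0 hh by auto
    moreover have "f (w + v + (H - (w + v))) \<ge> 1" using fH by simp
    ultimately show "\<exists>r\<in>{1<..<4} \<inter> grid n. 1 \<le> f (w + v + r)"
      by (intro bexI[of _ "H - (w + v)"] IntI) simp_all
    show "\<not> (\<exists>r\<in>{1<..<3} \<inter> grid n. 1 \<le> f (w + v + r))"
    proof
      assume "\<exists>r\<in>{1<..<3} \<inter> grid n. 1 \<le> f (w + v + r)"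
      then obtain r where r: "r \<in> {1<..<3} \<inter> grid n" "1 \<le> f (w + v + r)" by blast
      have rh: "r \<le> 3 - h" using gn[of r 3] r gi[of 3] by auto
      have g1: "w + v + r \<in> grid n" using r grid_add[OF wv] by auto
      have g2: "w + v + r < H" using w vh rh h0 by auto
      show False using below[OF g1 g2] r(2) by simp
    qed
  qed
  have c1: "s + 2 + 5 - h \<le> H \<and> H \<le> s + 2 + 5" using C1[OF sg _ _ P2] s by auto
  have "H = s + 7 - h \<or> H = s + 7"
  proof (cases "H = s + 7 - h")
    case False
    have g7: "s + 7 - h \<in> grid n" using gs[OF grid_add[OF s(1) gi[of 7]] hg] s hh by auto
    have "s + 7 - h < H" using False c1 by auto
    then have "s + 7 \<le> H" using gn[OF g7 Hg] by simp
    then show ?thesis using c1 by auto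
  qed simp
  then show False
  proof
    assume H: "H = s + 7 - h"
    have "s + (2 - h) \<in> grid n" using grid_add[OF s(1) gv2] by auto
    moreover have "0 < s + (2 - h)" using s hh by auto
    moreover have "H = s + (2 - h) + 5" using H by simp
    ultimately have "dphi1 n f (s + (2 - h))" using C2 by blast
    then show False using b v2 by blast
  next
    assume H: "H = s + 7"
    have "s + (2 + h) \<in> grid n" using grid_add[OF s(1) gv3] by auto
    moreover have "0 < s + (2 + h)" using s h0 by auto
    moreover have "H = s + (2 + h) + 5 - h" using H by simp
    ultimately have "dphi1 n f (s + (2 + h))" using C2 by blast
    then show False using c v3 by blast
  qed
qed

definition cphi1 :: "(real \<Rightarrow> real) \<Rightarrow> real \<Rightarrow> bool" where
  "cphi1 f w \<longleftrightarrow> (\<forall>v\<in>{1<..<2}. (\<exists>r\<in>{1<..<4}. 1 \<le> f (w + v + r)) \<and>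
      \<not> (\<exists>r\<in>{1<..<3}. 1 \<le> f (w + v + r)))"

lemma csat_phi1:
  "csat f w (Box {1<..<2} (Conj (Dia {1<..<4} (Atom {1..})) (Neg (Dia {1<..<3} (Atom {1..}))))) = cphi1 f w"
  by (simp add: Box_def cphi1_def add.assoc)

lemma cphi1_below:
  assumes "cphi1 f w" "x \<in> {w+2<..<w+5}"
  shows "f x < 1"
proof -
  define v where "v = 1 + (x - w - 2) / 3"
  define r where "r = 1 + 2 * (x - w - 2) / 3"
  have vI: "v \<in> {1<..<2}" and rI: "r \<in> {1<..<3}" using assms(2) by (auto simp: v_def r_def)
  have eq: "w + v + r = x" by (simp add: v_def r_def field_simps)
  have "\<not> (\<exists>r\<in>{1<..<3}. 1 \<le> f (w + v + r))" using assms(1) vI unfolding cphi1_def by blast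
  then have "\<not> 1 \<le> f (w + v + r)" using rI by blast
  then show ?thesis using eq by simp
qed

lemma cphi1_hit:
  assumes f: "continuous_on {0..} f" and P: "cphi1 f w" and w: "0 \<le> w"
  shows "1 \<le> f (w + 5)"
proof (rule ccontr)
  assume "\<not> 1 \<le> f (w + 5)"
  then have e: "0 < 1 - f (w + 5)" by simp
  have "w + 5 \<in> {0..}" using w by simp
  then obtain d where d: "d > 0" and dd: "\<And>y. y \<in> {0..} \<Longrightarrow> dist y (w+5) < d \<Longrightarrow> dist (f y) (f (w+5)) < 1 - f (w + 5)"
    using f e unfolding continuous_on_iff by metis
  define d' where "d' = min d 1 / 2"
  have d'0: "0 < d'" "d' < d" "d' < 1" using d by (auto simp: d'_def)
  have "1 + d' \<in> {1<..<2}" using d'0 by simp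
  then obtain r where r: "r \<in> {1<..<4}" "1 \<le> f (w + (1 + d') + r)" using P unfolding cphi1_def by blast
  define y where "y = w + (1 + d') + r"
  have "\<not> y \<in> {w+2<..<w+5}" using cphi1_below[OF P, of y] r(2) unfolding y_def by fastforce
  then have "w + 5 \<le> y" using r d'0 unfolding y_def by auto
  moreover have "y < w + 5 + d" using r d'0 unfolding y_def by auto
  ultimately have "dist (f y) (f (w+5)) < 1 - f (w + 5)" using dd[of y] w by (auto simp: dist_real_def)
  then have "f y < 1" by (auto simp: dist_real_def)
  then show False using r(2) unfolding y_def by simp
qed

lemma csat_psi_iff:
  fixes f :: "real \<Rightarrow> real"
  assumes f: "continuous_on {0..} f"
    and phi1: "\<phi>1 = Box {1<..<2} (Conj (Dia {1<..<4} (Atom {1..})) (Neg (Dia {1<..<3} (Atom {1..}))))"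
  shows "csat f 0 (Conj (Neg (Atom {1..})) (Conj (Neg (Dia {0<..<8} (Atom {1..})))
           (Dia {1<..<2} (Conj (Dia {1<..<3} \<phi>1) (Conj (Neg (Dia {1<..<2} \<phi>1)) (Neg (Dia {2<..<3} \<phi>1)))))))
     \<longleftrightarrow> (\<forall>t\<in>{0..8}. f t < 1) \<and> (\<exists>t\<in>{8<..<9}. 1 \<le> f t)"
  (is "?L \<longleftrightarrow> ?R")
proof
  assume D: ?L
  have f0: "f 0 < 1" and no8: "\<And>g. 0 < g \<Longrightarrow> g < 8 \<Longrightarrow> f g < 1"
    using D by (auto simp: not_le)
  from D have "\<exists>s\<in>{1<..<2}. (\<exists>u\<in>{1<..<3}. cphi1 f (s + u)) \<and>
      (\<forall>u\<in>{1<..<2}. \<not> cphi1 f (s + u)) \<and> (\<forall>u\<in>{2<..<3}. \<not> cphi1 f (s + u))"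
    by (simp add: phi1 csat_phi1)
  then obtain s where sI: "s \<in> {1<..<2}"
     and rest: "(\<exists>u\<in>{1<..<3}. cphi1 f (s + u)) \<and>
      (\<forall>u\<in>{1<..<2}. \<not> cphi1 f (s + u)) \<and> (\<forall>u\<in>{2<..<3}. \<not> cphi1 f (s + u))"
    by (rule bexE)
  have a: "\<exists>u\<in>{1<..<3}. cphi1 f (s + u)"
     and b: "\<forall>u\<in>{1<..<2}. \<not> cphi1 f (s + u)"
     and c: "\<forall>u\<in>{2<..<3}. \<not> cphi1 f (s + u)"
    using rest by simp_all
  from a obtain u where uI: "u \<in> {1<..<3}" and u4: "cphi1 f (s + u)" by (rule bexE)
  have "u = 2"
  proof (rule ccontr)
    assume "u \<noteq> 2"
    then have "u < 2 \<or> 2 < u" by linarith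
    then show False
    proof
      assume "u < 2" then have "u \<in> {1<..<2}" using uI by simp
      with b have "\<not> cphi1 f (s + u)" by (rule bspec)
      then show False using u4 by simp
    next
      assume "2 < u" then have "u \<in> {2<..<3}" using uI by simp
      with c have "\<not> cphi1 f (s + u)" by (rule bspec)
      then show False using u4 by simp
    qed
  qed
  with u4 have P2: "cphi1 f (s + 2)" by simp
  have hit: "1 \<le> f (s + 2 + 5)" using cphi1_hit[OF f P2] sI by simp
  have "f 8 < 1" using cphi1_below[OF P2, of 8] sI by simp
  then have "\<forall>t\<in>{0..8}. f t < 1" using f0 no8 by (metis atLeastAtMost_iff order_le_less)
  moreover have "s + 2 + 5 \<in> {8<..<9}" using sI by simp
  ultimately show ?R using hit by blast
next
  assume R: ?R
  then have below8: "\<And>t. 0 \<le> t \<Longrightarrow> t \<le> 8 \<Longrightarrow> f t < 1" by simp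
  from R obtain t1 where t1: "8 < t1" "t1 < 9" "1 \<le> f t1" by auto
  define S where "S = f -` {1..} \<inter> {8..t1}"
  have "continuous_on {8..t1} f" using f by (rule continuous_on_subset) auto
  then have "closed S" unfolding S_def by (intro closed_vimage_Int) auto
  moreover have "S \<noteq> {}" using t1 unfolding S_def by auto
  moreover have "bdd_below S" unfolding S_def by (rule bdd_belowI[of _ 8]) auto
  ultimately have TS: "Inf S \<in> S" by (rule closed_contains_Inf[rotated 2])
  define T where "T = Inf S"
  have T: "8 \<le> T" "T \<le> t1" "1 \<le> f T" using TS unfolding T_def S_def by auto
  have "T \<noteq> 8" using T below8[of 8] by auto
  with T have T8: "8 < T" by simp
  have bT: "f x < 1" if "0 \<le> x" "x < T" for x
  proof (cases "x \<le> 8")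
    case True then show ?thesis using below8 that by simp
  next
    case False
    have "x \<notin> S"
    proof
      assume "x \<in> S"
      then have "Inf S \<le> x" using \<open>bdd_below S\<close> by (rule cInf_lower)
      then show False using that unfolding T_def by simp
    qed
    then show ?thesis using False that T unfolding S_def by auto
  qed
  define s where "s = T - 7"
  have s: "1 < s" "s < 2" using T8 T t1 unfolding s_def by auto
  have P2: "cphi1 f (s + 2)" unfolding cphi1_def
  proof (intro ballI conjI)
    fix v :: real assume v: "v \<in> {1<..<2}"
    have "5 - v \<in> {1<..<4}" "s + 2 + v + (5 - v) = T" using v by (auto simp: s_def)
    then show "\<exists>r\<in>{1<..<4}. 1 \<le> f (s + 2 + v + r)" using T(3) by metis
    show "\<not> (\<exists>r\<in>{1<..<3}. 1 \<le> f (s + 2 + v + r))"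
    proof
      assume "\<exists>r\<in>{1<..<3}. 1 \<le> f (s + 2 + v + r)"
      then obtain r where r: "r \<in> {1<..<3}" "1 \<le> f (s + 2 + v + r)" by (rule bexE)
      have "f (s + 2 + v + r) < 1" using v r(1) s by (intro bT) (auto simp: s_def)
      then show False using r(2) by simp
    qed
  qed
  have nb: "\<not> cphi1 f (s + u)" if u: "u \<in> {1<..<2}" for u
  proof
    assume P: "cphi1 f (s + u)"
    have "3 - u \<in> {1<..<2}" using u by auto
    then obtain r where r: "r \<in> {1<..<4}" "1 \<le> f (s + u + (3 - u) + r)" using P unfolding cphi1_def by blast
    have "f (s + u + (3 - u) + r) < 1" using r(1) s u by (intro bT) (auto simp: s_def)
    then show False using r(2) by simp
  qed
  have nc: "\<not> cphi1 f (s + u)" if u: "u \<in> {2<..<3}" for u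
  proof
    assume P: "cphi1 f (s + u)"
    define v where "v = (7 - u) * 2 / 5"
    define r where "r = (7 - u) * 3 / 5"
    have "v \<in> {1<..<2}" "r \<in> {1<..<3}" using u by (auto simp: v_def r_def)
    moreover have "s + u + v + r = T" by (simp add: v_def r_def s_def field_simps)
    moreover have "\<not> (\<exists>r\<in>{1<..<3}. 1 \<le> f (s + u + v + r))" using P \<open>v \<in> {1<..<2}\<close> unfolding cphi1_def by blast
    ultimately show False using T(3) by blast
  qed
  have "s \<in> {1<..<2}" using s by simp
  moreover have "2 \<in> {1<..<3::real}" by simp
  ultimately have "\<exists>s\<in>{1<..<2}. (\<exists>u\<in>{1<..<3}. cphi1 f (s + u)) \<and>
      (\<forall>u\<in>{1<..<2}. \<not> cphi1 f (s + u)) \<and> (\<forall>u\<in>{2<..<3}. \<not> cphi1 f (s + u))"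
    using P2 nb nc by blast
  moreover have "f 0 < 1" "\<forall>g\<in>{0<..<8}. f g < 1" using below8 by auto
  ultimately show ?L by (simp add: phi1 csat_phi1 not_le)
qed

lemma normal_sym:
  assumes P: "prob_space M" and Y: "distributed M lborel Y (\<lambda>x. ennreal (normal_density 0 \<sigma> x))"
    and \<sigma>: "0 < \<sigma>" and A: "A \<in> sets borel"
  shows "measure M {\<omega>\<in>space M. Y \<omega> \<in> A} = measure M {\<omega>\<in>space M. - Y \<omega> \<in> A}"
proof -
  interpret prob_space M by fact
  have "distributed M lborel (\<lambda>x. 0 + (-1) * Y x) (\<lambda>x. ennreal (normal_density (0 + (-1)*0) (\<bar>-1\<bar> * \<sigma>) x))"
    by (rule normal_density_affine[OF Y \<sigma>]) simp
  then have Y': "distributed M lborel (\<lambda>x. - Y x) (\<lambda>x. ennreal (normal_density 0 \<sigma> x))" by simp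
  have "emeasure M (Y -` A \<inter> space M) = emeasure M ((\<lambda>x. - Y x) -` A \<inter> space M)"
    using distributed_emeasure[OF Y] distributed_emeasure[OF Y'] A by simp
  moreover have "Y -` A \<inter> space M = {\<omega>\<in>space M. Y \<omega> \<in> A}" "(\<lambda>x. - Y x) -` A \<inter> space M = {\<omega>\<in>space M. - Y \<omega> \<in> A}"
    by auto
  ultimately show ?thesis by (simp add: measure_def)
qed

lemma normal_pos:
  assumes P: "prob_space M" and Y: "distributed M lborel Y (\<lambda>x. ennreal (normal_density 0 \<sigma> x))"
    and \<sigma>: "0 < \<sigma>" and cd: "c < d"
  shows "0 < measure M {\<omega>\<in>space M. c < Y \<omega> \<and> Y \<omega> < d}"
proof -
  interpret prob_space M by fact
  have eq: "emeasure M (Y -` {c<..<d} \<inter> space M) = (\<integral>\<^sup>+x. ennreal (normal_density 0 \<sigma> x) * indicator {c<..<d} x \<partial>lborel)"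
    using distributed_emeasure[OF Y] by simp
  have ne: "emeasure M (Y -` {c<..<d} \<inter> space M) \<noteq> 0"
  proof
    assume "emeasure M (Y -` {c<..<d} \<inter> space M) = 0"
    then have "AE x in lborel. ennreal (normal_density 0 \<sigma> x) * indicator {c<..<d} x = 0"
      unfolding eq by (subst (asm) nn_integral_0_iff_AE) auto
    then have "AE x in lborel. x \<notin> {c<..<d}"
      by eventually_elim (metis ennreal_eq_0_iff indicator_simps(1) mult.right_neutral normal_density_pos[OF \<sigma>] not_le)
    then have "emeasure lborel {c<..<d} = 0"
      by (subst (asm) AE_iff_measurable[of "{c<..<d}"]) auto
    then show False using cd by simp
  qed
  have "Y -` {c<..<d} \<inter> space M = {\<omega>\<in>space M. c < Y \<omega> \<and> Y \<omega> < d}" by auto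
  with ne have "emeasure M {\<omega>\<in>space M. c < Y \<omega> \<and> Y \<omega> < d} \<noteq> 0" by simp
  then have "measure M {\<omega>\<in>space M. c < Y \<omega> \<and> Y \<omega> < d} \<noteq> 0"
    by (simp add: emeasure_eq_measure)
  then show ?thesis using measure_nonneg[of M] by (simp add: order_less_le)
qed

lemma bm_prob: "brownian_motion M X \<Longrightarrow> prob_space M"
  by (simp add: brownian_motion_def)
lemma bm_meas: "brownian_motion M X \<Longrightarrow> 0 \<le> t \<Longrightarrow> X t \<in> borel_measurable M"
  by (simp add: brownian_motion_def)
lemma bm_zero: "brownian_motion M X \<Longrightarrow> \<omega> \<in> space M \<Longrightarrow> X 0 \<omega> = 0"
  by (simp add: brownian_motion_def)
lemma bm_cont: "brownian_motion M X \<Longrightarrow> \<omega> \<in> space M \<Longrightarrow> continuous_on {0..} (\<lambda>t. X t \<omega>)"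
  by (simp add: brownian_motion_def)
lemma bm_dist: "brownian_motion M X \<Longrightarrow> 0 \<le> s \<Longrightarrow> s < t \<Longrightarrow>
   distributed M lborel (\<lambda>\<omega>. X t \<omega> - X s \<omega>) (\<lambda>x. ennreal (normal_density 0 (sqrt (t - s)) x))"
  by (simp add: brownian_motion_def)
lemma bm_indep: "brownian_motion M X \<Longrightarrow> 0 \<le> ts 0 \<Longrightarrow> (\<And>i. i < n \<Longrightarrow> ts i < ts (Suc i)) \<Longrightarrow>
   prob_space.indep_vars M (\<lambda>_. borel) (\<lambda>i \<omega>. X (ts (Suc i)) \<omega> - X (ts i) \<omega>) {..<n}"
  unfolding brownian_motion_def by blast

lemma split_indep:
  assumes BM: "brownian_motion M X" and ts0: "ts 0 = 0" and inc: "\<And>i. i \<le> k \<Longrightarrow> ts i < ts (Suc i)"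
    and Q: "Measurable.pred (PiM {..k} (\<lambda>_. borel)) Q" and S: "S \<in> sets borel"
  shows "measure M {\<omega>\<in>space M. Q (\<lambda>j\<in>{..k}. X (ts j) \<omega>) \<and> X (ts (Suc k)) \<omega> - X (ts k) \<omega> \<in> S}
       = measure M {\<omega>\<in>space M. Q (\<lambda>j\<in>{..k}. X (ts j) \<omega>)} * measure M {\<omega>\<in>space M. X (ts (Suc k)) \<omega> - X (ts k) \<omega> \<in> S}"
proof -
  interpret prob_space M using bm_prob[OF BM] .
  define D where "D i \<omega> = X (ts (Suc i)) \<omega> - X (ts i) \<omega>" for i \<omega>
  have ind: "indep_vars (\<lambda>_. borel) D {..<Suc k}"
    unfolding D_def by (rule bm_indep[OF BM]) (use ts0 inc in auto)
  have iv: "indep_var (PiM {..<k} (\<lambda>_. borel)) (\<lambda>\<omega>. restrict (\<lambda>i. D i \<omega>) {..<k})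
                      (PiM {k} (\<lambda>_. borel)) (\<lambda>\<omega>. restrict (\<lambda>i. D i \<omega>) {k})"
    by (rule indep_var_restrict[OF ind]) auto
  define \<Phi> where "\<Phi> x = (\<lambda>j\<in>{..k}. \<Sum>i<j. x i)" for x :: "nat \<Rightarrow> real"
  have \<Phi>m: "\<Phi> \<in> measurable (PiM {..<k} (\<lambda>_. borel)) (PiM {..k} (\<lambda>_. borel))"
    unfolding \<Phi>_def
  proof (rule measurable_restrict)
    fix j assume j: "j \<in> {..k}"
    show "(\<lambda>x::nat\<Rightarrow>real. \<Sum>i<j. x i) \<in> borel_measurable (PiM {..<k} (\<lambda>_. borel))"
      apply (rule borel_measurable_sum)
      apply (rule measurable_component_singleton)
      using j by auto
  qed
  define Xa where "Xa = \<Phi> -` {x \<in> space (PiM {..k} (\<lambda>_. borel)). Q x} \<inter> space (PiM {..<k} (\<lambda>_. borel))"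
  define Xb where "Xb = (\<lambda>y. y k) -` S \<inter> space (PiM {k} (\<lambda>_. borel :: real measure))"
  have Xa: "Xa \<in> sets (PiM {..<k} (\<lambda>_. borel))"
    unfolding Xa_def using \<Phi>m Q by (intro measurable_sets) (auto simp: pred_def)
  have Xb: "Xb \<in> sets (PiM {k} (\<lambda>_. borel))"
    unfolding Xb_def using S by (intro measurable_sets[OF measurable_component_singleton]) auto
  have tel: "\<Phi> (restrict (\<lambda>i. D i \<omega>) {..<k}) = (\<lambda>j\<in>{..k}. X (ts j) \<omega>)" if \<omega>: "\<omega> \<in> space M" for \<omega>
  proof
    fix j show "\<Phi> (restrict (\<lambda>i. D i \<omega>) {..<k}) j = (\<lambda>j\<in>{..k}. X (ts j) \<omega>) j"
    proof (cases "j \<le> k")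
      case True
      have "(\<Sum>i<j. restrict (\<lambda>i. D i \<omega>) {..<k} i) = (\<Sum>i<j. X (ts (Suc i)) \<omega> - X (ts i) \<omega>)"
        using True by (intro sum.cong) (auto simp: D_def)
      also have "\<dots> = X (ts j) \<omega> - X (ts 0) \<omega>" by (rule sum_lessThan_telescope)
      also have "\<dots> = X (ts j) \<omega>" using bm_zero[OF BM \<omega>] ts0 by simp
      finally show ?thesis using True by (simp add: \<Phi>_def)
    qed (simp add: \<Phi>_def)
  qed
  have sp: "restrict g I \<in> space (PiM I (\<lambda>_. borel :: real measure))" for g I
    by (simp add: space_PiM)
  have "prob ((\<lambda>x. (restrict (\<lambda>i. D i x) {..<k}, restrict (\<lambda>i. D i x) {k})) -` (Xa \<times> Xb) \<inter> space M) =
    prob ((\<lambda>x. restrict (\<lambda>i. D i x) {..<k}) -` Xa \<inter> space M) * prob ((\<lambda>x. restrict (\<lambda>i. D i x) {k}) -` Xb \<inter> space M)"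
    by (rule indep_varD[OF iv Xa Xb])
  moreover have "(\<lambda>x. (restrict (\<lambda>i. D i x) {..<k}, restrict (\<lambda>i. D i x) {k})) -` (Xa \<times> Xb) \<inter> space M
     = {\<omega>\<in>space M. Q (\<lambda>j\<in>{..k}. X (ts j) \<omega>) \<and> X (ts (Suc k)) \<omega> - X (ts k) \<omega> \<in> S}"
    using tel sp unfolding Xa_def Xb_def by (auto simp: D_def space_PiM)
  moreover have "(\<lambda>x. restrict (\<lambda>i. D i x) {..<k}) -` Xa \<inter> space M = {\<omega>\<in>space M. Q (\<lambda>j\<in>{..k}. X (ts j) \<omega>)}"
    using tel sp unfolding Xa_def by auto
  moreover have "(\<lambda>x. restrict (\<lambda>i. D i x) {k}) -` Xb \<inter> space M = {\<omega>\<in>space M. X (ts (Suc k)) \<omega> - X (ts k) \<omega> \<in> S}"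
    unfolding Xb_def by (auto simp: D_def space_PiM)
  ultimately show ?thesis by simp
qed

lemma levy:
  fixes X :: "real \<Rightarrow> 'a \<Rightarrow> real"
  assumes BM: "brownian_motion M X"
  shows "measure M {\<omega>\<in>space M. (\<exists>j\<le>8*2^m. a \<le> X (real j / 2^m) \<omega>) \<and> X 8 \<omega> < a}
           \<le> measure M {\<omega>\<in>space M. a < X 8 \<omega>}"
proof -
  interpret prob_space M using bm_prob[OF BM] .
  define N :: nat where "N = 8 * 2^m"
  define tt where "tt j = real j / 2^m" for j :: nat
  have [measurable]: "X (tt j) \<in> borel_measurable M" for j
    by (rule bm_meas[OF BM]) (simp add: tt_def)
  have [measurable]: "X 8 \<in> borel_measurable M" by (rule bm_meas[OF BM]) simp
  have ttN: "tt N = 8" by (simp add: tt_def N_def)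
  have ttlt: "tt k < 8" if "k < N" for k
  proof -
    have "real k < real N" using that by simp
    then have "real k / 2^m < real N / 2^m" by (simp add: divide_strict_right_mono)
    then show ?thesis using ttN by (simp add: tt_def)
  qed
  have ttinc: "tt i < tt (Suc i)" for i by (simp add: tt_def divide_strict_right_mono)
  have tt0: "tt 0 = 0" "\<And>j. 0 \<le> tt j" by (simp_all add: tt_def)
  define C where "C k = {\<omega>\<in>space M. (\<forall>j<k. X (tt j) \<omega> < a) \<and> a \<le> X (tt k) \<omega>}" for k
  define Lo where "Lo k = {\<omega>\<in>space M. ((\<forall>j<k. X (tt j) \<omega> < a) \<and> a \<le> X (tt k) \<omega>) \<and> X 8 \<omega> < a}" for k
  define Hi where "Hi k = {\<omega>\<in>space M. ((\<forall>j<k. X (tt j) \<omega> < a) \<and> a \<le> X (tt k) \<omega>) \<and> a < X 8 \<omega>}" for k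
  have Lo_sets: "Lo k \<in> sets M" for k unfolding Lo_def by measurable
  have Hi_sets: "Hi k \<in> sets M" for k unfolding Hi_def by measurable
  have key: "measure M (Lo k) \<le> measure M (Hi k)" if k: "k \<le> N" for k
  proof (cases "k = N")
    case True
    then have "Lo k = {}" unfolding Lo_def using ttN by auto
    then show ?thesis by simp
  next
    case False
    with k have kN: "k < N" by simp
    define ts where "ts i = (if i \<le> k then tt i else 8)" for i
    have ts0: "ts 0 = 0" by (simp add: ts_def tt0)
    have tsinc: "ts i < ts (Suc i)" if "i \<le> k" for i
    proof -
      have "i = k \<or> Suc i \<le> k" using that by linarith
      then show ?thesis using that ttinc ttlt[OF kN] by (auto simp: ts_def)
    qed
    define Q where "Q x = ((\<forall>j\<in>{..<k}. x j < a) \<and> a \<le> x k)" for x :: "nat \<Rightarrow> real"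
    have Qm: "Measurable.pred (PiM {..k} (\<lambda>_. borel)) Q" unfolding Q_def by measurable
    have Qeq: "Q (\<lambda>j\<in>{..k}. X (ts j) \<omega>) \<longleftrightarrow> (\<forall>j<k. X (tt j) \<omega> < a) \<and> a \<le> X (tt k) \<omega>" for \<omega>
      by (auto simp: Q_def ts_def)
    have tsS: "ts (Suc k) = 8" "ts k = tt k" by (simp_all add: ts_def)
    have s1: "measure M {\<omega>\<in>space M. ((\<forall>j<k. X (tt j) \<omega> < a) \<and> a \<le> X (tt k) \<omega>) \<and> X 8 \<omega> - X (tt k) \<omega> \<in> S}
       = measure M (C k) * measure M {\<omega>\<in>space M. X 8 \<omega> - X (tt k) \<omega> \<in> S}" if S: "S \<in> sets borel" for S
      using split_indep[OF BM ts0 tsinc Qm S] unfolding Qeq tsS C_def by simp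
    have Yd: "distributed M lborel (\<lambda>\<omega>. X 8 \<omega> - X (tt k) \<omega>) (\<lambda>x. ennreal (normal_density 0 (sqrt (8 - tt k)) x))"
      by (rule bm_dist[OF BM tt0(2) ttlt[OF kN]])
    have sym: "measure M {\<omega>\<in>space M. X 8 \<omega> - X (tt k) \<omega> \<in> {..<0}} = measure M {\<omega>\<in>space M. X 8 \<omega> - X (tt k) \<omega> \<in> {0<..}}"
      using normal_sym[OF prob_space_axioms Yd _, of "{..<0}"] ttlt[OF kN] by simp
    have "measure M (Lo k) \<le> measure M {\<omega>\<in>space M. ((\<forall>j<k. X (tt j) \<omega> < a) \<and> a \<le> X (tt k) \<omega>) \<and> X 8 \<omega> - X (tt k) \<omega> \<in> {..<0}}"
      by (rule finite_measure_mono) (auto simp: Lo_def)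
    also have "\<dots> = measure M (C k) * measure M {\<omega>\<in>space M. X 8 \<omega> - X (tt k) \<omega> \<in> {..<0}}" by (rule s1) simp
    also have "\<dots> = measure M (C k) * measure M {\<omega>\<in>space M. X 8 \<omega> - X (tt k) \<omega> \<in> {0<..}}" by (simp only: sym)
    also have "\<dots> = measure M {\<omega>\<in>space M. ((\<forall>j<k. X (tt j) \<omega> < a) \<and> a \<le> X (tt k) \<omega>) \<and> X 8 \<omega> - X (tt k) \<omega> \<in> {0<..}}"
      by (rule s1[symmetric]) simp
    also have "\<dots> \<le> measure M (Hi k)"
      using Hi_sets by (intro finite_measure_mono) (auto simp: Hi_def)
    finally show ?thesis .
  qed
  have U0: "{\<omega>\<in>space M. (\<exists>j\<le>8*2^m. a \<le> X (real j / 2^m) \<omega>) \<and> X 8 \<omega> < a}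
     = {\<omega>\<in>space M. (\<exists>j\<le>N. a \<le> X (tt j) \<omega>) \<and> X 8 \<omega> < a}"
    unfolding tt_def N_def ..
  have U1: "{\<omega>\<in>space M. (\<exists>j\<le>N. a \<le> X (tt j) \<omega>) \<and> X 8 \<omega> < a} = (\<Union>k\<in>{..N}. Lo k)"
  proof (intro equalityI subsetI)
    fix \<omega> assume "\<omega> \<in> {\<omega>\<in>space M. (\<exists>j\<le>N. a \<le> X (tt j) \<omega>) \<and> X 8 \<omega> < a}"
    then have \<omega>: "\<omega> \<in> space M" "\<exists>j. j \<le> N \<and> a \<le> X (tt j) \<omega>" "X 8 \<omega> < a" by auto
    define k where "k = (LEAST j. j \<le> N \<and> a \<le> X (tt j) \<omega>)"
    obtain j0 where j0: "j0 \<le> N \<and> a \<le> X (tt j0) \<omega>" using \<omega>(2) by blast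
    have k: "k \<le> N \<and> a \<le> X (tt k) \<omega>" unfolding k_def using j0 by (rule LeastI)
    have lt: "X (tt j) \<omega> < a" if jk: "j < k" for j
    proof -
      have "\<not> (j \<le> N \<and> a \<le> X (tt j) \<omega>)" using jk unfolding k_def by (rule not_less_Least)
      moreover have "j \<le> N" using jk k by simp
      ultimately show ?thesis by simp
    qed
    have "\<omega> \<in> Lo k" unfolding Lo_def using \<omega>(1,3) k lt by blast
    then show "\<omega> \<in> (\<Union>k\<in>{..N}. Lo k)" using k by blast
  next
    fix \<omega> assume "\<omega> \<in> (\<Union>k\<in>{..N}. Lo k)"
    then obtain k where k: "k \<le> N" "\<omega> \<in> Lo k" by auto
    then have "\<omega> \<in> space M" "a \<le> X (tt k) \<omega>" "X 8 \<omega> < a" by (simp_all add: Lo_def)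
    then show "\<omega> \<in> {\<omega>\<in>space M. (\<exists>j\<le>N. a \<le> X (tt j) \<omega>) \<and> X 8 \<omega> < a}" using k(1) by blast
  qed
  have Cdisj: "C k \<inter> C k' = {}" if kk: "k < k'" for k k'
  proof (rule equals0I)
    fix \<omega> assume "\<omega> \<in> C k \<inter> C k'"
    then have "\<forall>j<k'. X (tt j) \<omega> < a" "a \<le> X (tt k) \<omega>" by (simp_all add: C_def)
    then show False using kk by force
  qed
  have disj: "disjoint_family_on f {..N}" if f: "\<And>k. f k \<subseteq> C k" for f
    unfolding disjoint_family_on_def
  proof (intro ballI impI)
    fix k k' :: nat assume "k \<noteq> k'"
    then have "k < k' \<or> k' < k" by linarith
    then have "C k \<inter> C k' = {}" using Cdisj[of k k'] Cdisj[of k' k] by blast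
    then show "f k \<inter> f k' = {}" using f[of k] f[of k'] by blast
  qed
  have "measure M (\<Union>k\<in>{..N}. Lo k) = (\<Sum>k\<in>{..N}. measure M (Lo k))"
  proof (rule finite_measure_finite_Union)
    show "disjoint_family_on Lo {..N}" by (rule disj) (auto simp: Lo_def C_def)
  qed (use Lo_sets in auto)
  also have "\<dots> \<le> (\<Sum>k\<in>{..N}. measure M (Hi k))" by (rule sum_mono) (use key in auto)
  also have "\<dots> = measure M (\<Union>k\<in>{..N}. Hi k)"
  proof (rule finite_measure_finite_Union[symmetric])
    show "disjoint_family_on Hi {..N}" by (rule disj) (auto simp: Hi_def C_def)
  qed (use Hi_sets in auto)
  also have "\<dots> \<le> measure M {\<omega>\<in>space M. a < X 8 \<omega>}"
    by (rule finite_measure_mono) (auto simp: Hi_def)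
  finally show ?thesis unfolding U0 U1 .
qed

lemma cont_le_dense:
  fixes f :: "real \<Rightarrow> real"
  assumes f: "continuous_on {0..} f" and t: "0 \<le> t"
    and D: "\<And>\<delta>. \<delta> > 0 \<Longrightarrow> \<exists>q\<ge>0. \<bar>q - t\<bar> < \<delta> \<and> f q \<le> c"
  shows "f t \<le> c"
proof (rule ccontr)
  assume "\<not> f t \<le> c"
  then have e: "0 < f t - c" by simp
  have "t \<in> {0..}" using t by simp
  then obtain d where d: "d > 0" and dd: "\<And>y. y \<in> {0..} \<Longrightarrow> dist y t < d \<Longrightarrow> dist (f y) (f t) < f t - c"
    using f e unfolding continuous_on_iff by metis
  obtain q where q: "q \<ge> 0" "\<bar>q - t\<bar> < d" "f q \<le> c" using D[OF d] by blast
  have "dist (f q) (f t) < f t - c" using dd[of q] q by (simp add: dist_real_def)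
  then show False using q(3) by (simp add: dist_real_def)
qed

lemma dyadic_approx:
  fixes t :: real
  assumes "0 \<le> t" "t \<le> 8" "\<delta> > 0"
  shows "\<exists>m j. j \<le> 8 * 2^m \<and> \<bar>real j / 2^m - t\<bar> < \<delta>"
proof -
  have "\<forall>\<^sub>F n in sequentially. \<bar>(1/2::real)^n\<bar> < \<delta>"
    by (rule Archimedean_eventually_pow_inverse) (use assms in auto)
  then obtain m where m: "\<bar>(1/2::real)^m\<bar> < \<delta>" by (meson eventually_sequentially order_refl)
  define j where "j = nat \<lfloor>t * 2^m\<rfloor>"
  have fl0: "0 \<le> \<lfloor>t * 2^m\<rfloor>" using assms by simp
  have rj: "real j = of_int \<lfloor>t * 2^m\<rfloor>" using fl0 by (simp add: j_def)
  have "real j \<le> t * 2^m" using rj by simp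
  also have "\<dots> \<le> 8 * 2^m" using assms by simp
  finally have "real j \<le> real (8 * 2^m)" by simp
  then have "j \<le> 8 * 2^m" by (simp only: of_nat_le_iff)
  moreover have "t * 2^m < real j + 1" using rj by simp
  then have "t < (real j + 1) / 2^m" by (simp add: pos_less_divide_eq)
  then have "t - real j / 2^m < 1 / 2^m" by (simp add: add_divide_distrib)
  moreover have "real j / 2^m \<le> t" using \<open>real j \<le> t * 2^m\<close> by (simp add: field_simps)
  moreover have "1 / (2::real)^m = (1/2)^m" by (simp add: power_divide)
  ultimately show ?thesis using m by (intro exI[of _ m] exI[of _ j]) auto
qed

lemma Aset:
  fixes X :: "real \<Rightarrow> 'a \<Rightarrow> real"
  assumes BM: "brownian_motion M X" and ab: "0 \<le> a" "a \<le> b"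
  shows "{\<omega>\<in>space M. \<forall>t\<in>{a..b}. X t \<omega> < 1} \<in> sets M"
proof -
  define D where "D = insert a (\<rat> \<inter> {a..b})"
  have cD: "countable D" unfolding D_def using countable_rat by auto
  have D0: "\<And>q. q \<in> D \<Longrightarrow> a \<le> q \<and> q \<le> b" using ab unfolding D_def by auto
  have eq: "{\<omega>\<in>space M. \<forall>t\<in>{a..b}. X t \<omega> < 1} = {\<omega>\<in>space M. \<exists>k::nat. \<forall>q\<in>D. X q \<omega> \<le> 1 - 1 / real (Suc k)}"
  proof (intro Collect_cong conj_cong refl)
    fix \<omega> assume \<omega>: "\<omega> \<in> space M"
    have c: "continuous_on {a..b} (\<lambda>t. X t \<omega>)"
      using bm_cont[OF BM \<omega>] by (rule continuous_on_subset) (use ab in auto)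
    show "(\<forall>t\<in>{a..b}. X t \<omega> < 1) \<longleftrightarrow> (\<exists>k::nat. \<forall>q\<in>D. X q \<omega> \<le> 1 - 1 / real (Suc k))"
    proof
      assume A: "\<forall>t\<in>{a..b}. X t \<omega> < 1"
      obtain x0 where x0: "x0 \<in> {a..b}" "\<And>y. y \<in> {a..b} \<Longrightarrow> X y \<omega> \<le> X x0 \<omega>"
        using continuous_attains_sup[OF compact_Icc _ c] ab by auto
      have "0 < 1 - X x0 \<omega>" using A x0 by auto
      then obtain n where n: "n > 0" "inverse (real n) < 1 - X x0 \<omega>" using ex_inverse_of_nat_less by blast
      then obtain k where k: "n = Suc k" by (cases n) auto
      have "\<forall>q\<in>D. X q \<omega> \<le> 1 - 1 / real (Suc k)"
      proof
        fix q assume "q \<in> D"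
        then have "X q \<omega> \<le> X x0 \<omega>" using x0(2) D0 by auto
        moreover have "X x0 \<omega> < 1 - 1 / real (Suc k)" using n k by (simp add: inverse_eq_divide)
        ultimately show "X q \<omega> \<le> 1 - 1 / real (Suc k)" by linarith
      qed
      then show "\<exists>k::nat. \<forall>q\<in>D. X q \<omega> \<le> 1 - 1 / real (Suc k)" by blast
    next
      assume "\<exists>k::nat. \<forall>q\<in>D. X q \<omega> \<le> 1 - 1 / real (Suc k)"
      then obtain k :: nat where k: "\<forall>q\<in>D. X q \<omega> \<le> 1 - 1 / real (Suc k)" by blast
      show "\<forall>t\<in>{a..b}. X t \<omega> < 1"
      proof
        fix t assume t: "t \<in> {a..b}"
        have "X t \<omega> \<le> 1 - 1 / real (Suc k)"
        proof (rule cont_le_dense[OF bm_cont[OF BM \<omega>]])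
          show "0 \<le> t" using t ab by simp
          fix \<delta> :: real assume \<delta>: "\<delta> > 0"
          show "\<exists>q\<ge>0. \<bar>q - t\<bar> < \<delta> \<and> X q \<omega> \<le> 1 - 1 / real (Suc k)"
          proof (cases "a = b")
            case True
            then have "t = a" "a \<in> D" using t by (auto simp: D_def)
            then show ?thesis using k \<delta> ab by (intro exI[of _ a]) auto
          next
            case False
            have "max a (t - \<delta>) < min b (t + \<delta>)" using False ab t \<delta> by auto
            then obtain r where r: "r \<in> \<rat>" "max a (t - \<delta>) < r" "r < min b (t + \<delta>)"
              using Rats_dense_in_real by blast
            then have "r \<in> D" unfolding D_def by auto
            then show ?thesis using k r ab by (intro exI[of _ r]) auto
          qed
        qed
        then show "X t \<omega> < 1" by (smt (verit) divide_pos_pos of_nat_0_less_iff zero_less_Suc)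
      qed
    qed
  qed
  have "{\<omega>\<in>space M. \<exists>k::nat. \<forall>q\<in>D. X q \<omega> \<le> 1 - 1 / real (Suc k)} \<in> sets M"
  proof (rule sets.sets_Collect_countable_Ex, rule sets.sets_Collect_countable_All'[OF _ cD])
    fix k :: nat and q assume q: "q \<in> D"
    have [measurable]: "X q \<in> borel_measurable M" using bm_meas[OF BM] D0[OF q] ab by auto
    show "{\<omega>\<in>space M. X q \<omega> \<le> 1 - 1 / real (Suc k)} \<in> sets M" by measurable
  qed
  then show ?thesis unfolding eq .
qed

lemma E_sets:
  fixes X :: "real \<Rightarrow> 'a \<Rightarrow> real"
  assumes BM: "brownian_motion M X"
  shows "{\<omega>\<in>space M. (\<forall>t\<in>{0..8}. X t \<omega> < 1) \<and> (\<exists>t\<in>{8<..<9}. 1 \<le> X t \<omega>)} \<in> sets M"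
proof -
  define e where "e j = 1 / (real j + 3)" for j :: nat
  define A where "A j = {\<omega>\<in>space M. \<forall>t\<in>{8 + e j..9 - e j}. X t \<omega> < 1}" for j
  have e: "0 < e j" "e j \<le> 1/3" for j by (auto simp: e_def field_simps)
  have A: "A j \<in> sets M" for j unfolding A_def by (rule Aset[OF BM]) (use e[of j] in auto)
  have A0: "{\<omega>\<in>space M. \<forall>t\<in>{0..8}. X t \<omega> < 1} \<in> sets M" by (rule Aset[OF BM]) auto
  have eq: "{\<omega>\<in>space M. (\<forall>t\<in>{0..8}. X t \<omega> < 1) \<and> (\<exists>t\<in>{8<..<9}. 1 \<le> X t \<omega>)}
     = {\<omega>\<in>space M. \<forall>t\<in>{0..8}. X t \<omega> < 1} \<inter> (\<Union>j. space M - A j)"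
  proof (intro equalityI subsetI)
    fix \<omega> assume "\<omega> \<in> {\<omega>\<in>space M. (\<forall>t\<in>{0..8}. X t \<omega> < 1) \<and> (\<exists>t\<in>{8<..<9}. 1 \<le> X t \<omega>)}"
    then have \<omega>: "\<omega> \<in> space M" "\<forall>t\<in>{0..8}. X t \<omega> < 1" and "\<exists>t\<in>{8<..<9}. 1 \<le> X t \<omega>" by auto
    then obtain t where t: "8 < t" "t < 9" "1 \<le> X t \<omega>" by auto
    have "0 < min (t - 8) (9 - t)" using t by simp
    then obtain n where n: "n > 0" "inverse (real n) < min (t - 8) (9 - t)" using ex_inverse_of_nat_less by blast
    have "e n \<le> inverse (real n)" using n(1) by (simp add: e_def field_simps)
    then have "t \<in> {8 + e n..9 - e n}" using n t by auto
    note tI = this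
    have "\<omega> \<notin> A n"
    proof
      assume "\<omega> \<in> A n"
      then have "\<forall>t\<in>{8 + e n..9 - e n}. X t \<omega> < 1" by (simp add: A_def)
      then have "X t \<omega> < 1" using tI by blast
      then show False using t by simp
    qed
    then show "\<omega> \<in> {\<omega>\<in>space M. \<forall>t\<in>{0..8}. X t \<omega> < 1} \<inter> (\<Union>j. space M - A j)" using \<omega> by auto
  next
    fix \<omega> assume "\<omega> \<in> {\<omega>\<in>space M. \<forall>t\<in>{0..8}. X t \<omega> < 1} \<inter> (\<Union>j. space M - A j)"
    then obtain j where \<omega>: "\<omega> \<in> space M" "\<forall>t\<in>{0..8}. X t \<omega> < 1" "\<omega> \<notin> A j" by auto
    then obtain t where t: "t \<in> {8 + e j..9 - e j}" "\<not> X t \<omega> < 1" unfolding A_def by auto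
    then have "t \<in> {8<..<9}" "1 \<le> X t \<omega>" using e[of j] by auto
    then show "\<omega> \<in> {\<omega>\<in>space M. (\<forall>t\<in>{0..8}. X t \<omega> < 1) \<and> (\<exists>t\<in>{8<..<9}. 1 \<le> X t \<omega>)}"
      using \<omega> by auto
  qed
  show ?thesis unfolding eq using A A0 by auto
qed

lemma E_pos:
  fixes X :: "real \<Rightarrow> 'a \<Rightarrow> real"
  assumes BM: "brownian_motion M X"
  shows "0 < measure M {\<omega>\<in>space M. (\<forall>t\<in>{0..8}. X t \<omega> < 1) \<and> (\<exists>t\<in>{8<..<9}. 1 \<le> X t \<omega>)}"
proof -
  interpret prob_space M using bm_prob[OF BM] .
  define a :: real where "a = 1/2"
  have [measurable]: "X 8 \<in> borel_measurable M" "X (17/2) \<in> borel_measurable M"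
    "\<And>j m. X (real j / 2^m) \<in> borel_measurable M"
    by (auto intro!: bm_meas[OF BM])
  have Y8: "distributed M lborel (\<lambda>\<omega>. X 8 \<omega> - X 0 \<omega>) (\<lambda>x. ennreal (normal_density 0 (sqrt 8) x))"
    using bm_dist[OF BM, of 0 8] by simp
  have eqset: "{\<omega>\<in>space M. R (X 8 \<omega> - X 0 \<omega>)} = {\<omega>\<in>space M. R (X 8 \<omega>)}" for R
    using bm_zero[OF BM] by auto
  have "0 < measure M {\<omega>\<in>space M. -a < X 8 \<omega> - X 0 \<omega> \<and> X 8 \<omega> - X 0 \<omega> < a}"
    by (rule normal_pos[OF prob_space_axioms Y8]) (simp_all add: a_def)
  moreover have "{\<omega>\<in>space M. -a < X 8 \<omega> - X 0 \<omega> \<and> X 8 \<omega> - X 0 \<omega> < a} = {\<omega>\<in>space M. -a < X 8 \<omega> \<and> X 8 \<omega> < a}"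
    by (rule eqset)
  ultimately have eps: "0 < measure M {\<omega>\<in>space M. -a < X 8 \<omega> \<and> X 8 \<omega> < a}" by simp
  have sym: "measure M {\<omega>\<in>space M. a < X 8 \<omega>} = measure M {\<omega>\<in>space M. X 8 \<omega> < -a}"
  proof -
    have "measure M {\<omega>\<in>space M. X 8 \<omega> - X 0 \<omega> \<in> {a<..}} = measure M {\<omega>\<in>space M. - (X 8 \<omega> - X 0 \<omega>) \<in> {a<..}}"
      by (rule normal_sym[OF prob_space_axioms Y8]) auto
    moreover have "{\<omega>\<in>space M. X 8 \<omega> - X 0 \<omega> \<in> {a<..}} = {\<omega>\<in>space M. a < X 8 \<omega>}"
      using bm_zero[OF BM] by auto
    moreover have "{\<omega>\<in>space M. - (X 8 \<omega> - X 0 \<omega>) \<in> {a<..}} = {\<omega>\<in>space M. X 8 \<omega> < -a}"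
      using bm_zero[OF BM] by auto
    ultimately show ?thesis by simp
  qed
  define L where "L i = {\<omega>\<in>space M. X 8 \<omega> \<le> - real i}" for i :: nat
  have Ls: "range L \<subseteq> sets M" unfolding L_def by auto
  have Ld: "decseq L" unfolding L_def decseq_def by auto
  have "(\<Inter>i. L i) = {}"
  proof (rule equals0I)
    fix \<omega> assume w: "\<omega> \<in> (\<Inter>i. L i)"
    obtain n :: nat where n: "- X 8 \<omega> < real n" using reals_Archimedean2 by blast
    have "\<omega> \<in> L n" using w by blast
    then have "X 8 \<omega> \<le> - real n" by (simp add: L_def)
    then show False using n by linarith
  qed
  then have "(\<lambda>i. measure M (L i)) \<longlonglongrightarrow> 0" using finite_Lim_measure_decseq[OF Ls Ld] by simp
  then have "\<forall>\<^sub>F i in sequentially. measure M (L i) < measure M {\<omega>\<in>space M. -a < X 8 \<omega> \<and> X 8 \<omega> < a}"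
    using eps by (rule order_tendstoD(2))
  then obtain i0 where i0: "\<And>i. i \<ge> i0 \<Longrightarrow> measure M (L i) < measure M {\<omega>\<in>space M. -a < X 8 \<omega> \<and> X 8 \<omega> < a}"
    unfolding eventually_sequentially by blast
  define i where "i = max i0 1"
  define b where "b = real i"
  have b1: "1 \<le> b" by (simp add: b_def i_def)
  have Li: "measure M {\<omega>\<in>space M. X 8 \<omega> \<le> - b} < measure M {\<omega>\<in>space M. -a < X 8 \<omega> \<and> X 8 \<omega> < a}"
    using i0[of i] unfolding L_def b_def i_def by simp
  define c where "c = measure M {\<omega>\<in>space M. -b < X 8 \<omega> \<and> X 8 \<omega> < a} - measure M {\<omega>\<in>space M. a < X 8 \<omega>}"
  have c: "0 < c"
  proof -
    have "measure M {\<omega>\<in>space M. -b < X 8 \<omega> \<and> X 8 \<omega> < -a} + measure M {\<omega>\<in>space M. -a < X 8 \<omega> \<and> X 8 \<omega> < a}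
        = measure M ({\<omega>\<in>space M. -b < X 8 \<omega> \<and> X 8 \<omega> < -a} \<union> {\<omega>\<in>space M. -a < X 8 \<omega> \<and> X 8 \<omega> < a})"
      by (rule finite_measure_Union[symmetric]) auto
    also have "\<dots> \<le> measure M {\<omega>\<in>space M. -b < X 8 \<omega> \<and> X 8 \<omega> < a}"
      using b1 by (intro finite_measure_mono) (auto simp: a_def)
    finally have 1: "measure M {\<omega>\<in>space M. -b < X 8 \<omega> \<and> X 8 \<omega> < -a} + measure M {\<omega>\<in>space M. -a < X 8 \<omega> \<and> X 8 \<omega> < a}
        \<le> measure M {\<omega>\<in>space M. -b < X 8 \<omega> \<and> X 8 \<omega> < a}" .
    have "measure M {\<omega>\<in>space M. X 8 \<omega> < -a} \<le> measure M ({\<omega>\<in>space M. X 8 \<omega> \<le> - b} \<union> {\<omega>\<in>space M. -b < X 8 \<omega> \<and> X 8 \<omega> < -a})"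
      by (intro finite_measure_mono) auto
    also have "\<dots> \<le> measure M {\<omega>\<in>space M. X 8 \<omega> \<le> - b} + measure M {\<omega>\<in>space M. -b < X 8 \<omega> \<and> X 8 \<omega> < -a}"
      by (rule measure_Un_le) auto
    finally have 2: "measure M {\<omega>\<in>space M. X 8 \<omega> < -a} \<le> measure M {\<omega>\<in>space M. X 8 \<omega> \<le> - b} + measure M {\<omega>\<in>space M. -b < X 8 \<omega> \<and> X 8 \<omega> < -a}" .
    show ?thesis unfolding c_def sym using 1 2 Li by linarith
  qed
  define d where "d = measure M {\<omega>\<in>space M. X (17/2) \<omega> - X 8 \<omega> \<in> {1+b<..}}"
  have d: "0 < d"
  proof -
    have Yd: "distributed M lborel (\<lambda>\<omega>. X (17/2) \<omega> - X 8 \<omega>) (\<lambda>x. ennreal (normal_density 0 (sqrt (17/2 - 8)) x))"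
      by (rule bm_dist[OF BM]) auto
    have "0 < measure M {\<omega>\<in>space M. 1 + b < X (17/2) \<omega> - X 8 \<omega> \<and> X (17/2) \<omega> - X 8 \<omega> < 2 + b}"
      by (rule normal_pos[OF prob_space_axioms Yd]) auto
    also have "\<dots> \<le> d" unfolding d_def by (intro finite_measure_mono) auto
    finally show ?thesis .
  qed
  define G where "G m = {\<omega>\<in>space M. ((\<forall>j\<le>8*2^m. X (real j / 2^m) \<omega> < a) \<and> -b < X 8 \<omega>) \<and> X (17/2) \<omega> - X 8 \<omega> \<in> {1+b<..}}" for m :: nat
  have Gs: "G m \<in> sets M" for m unfolding G_def by measurable
  have Gbound: "c * d \<le> measure M (G m)" for m
  proof -
    define N :: nat where "N = 8 * 2^m"
    define ts where "ts i = (if i \<le> N then real i / 2^m else 17/2)" for i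
    have tsN: "ts N = 8" by (simp add: ts_def N_def)
    have ts0: "ts 0 = 0" by (simp add: ts_def)
    have tsinc: "ts i < ts (Suc i)" if "i \<le> N" for i
    proof -
      have "i = N \<or> Suc i \<le> N" using that by linarith
      then show ?thesis
      proof
        assume "i = N" then show ?thesis using tsN by (simp add: ts_def)
      next
        assume "Suc i \<le> N" then show ?thesis by (simp add: ts_def divide_strict_right_mono)
      qed
    qed
    define Q where "Q x = ((\<forall>j\<in>{..N}. x j < a) \<and> -b < x N)" for x :: "nat \<Rightarrow> real"
    have Qm: "Measurable.pred (PiM {..N} (\<lambda>_. borel)) Q" unfolding Q_def by measurable
    have Qeq: "Q (\<lambda>j\<in>{..N}. X (ts j) \<omega>) \<longleftrightarrow> (\<forall>j\<le>8*2^m. X (real j / 2^m) \<omega> < a) \<and> -b < X 8 \<omega>" for \<omega>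
      using tsN by (auto simp: Q_def ts_def N_def)
    have tsS: "ts (Suc N) = 17/2" by (simp add: ts_def)
    define H where "H = {\<omega>\<in>space M. (\<forall>j\<le>8*2^m. X (real j / 2^m) \<omega> < a) \<and> -b < X 8 \<omega>}"
    have GH: "measure M (G m) = measure M H * d"
      using split_indep[OF BM ts0 tsinc Qm, of "{1+b<..}"] unfolding Qeq tsS tsN
      by (simp add: G_def H_def d_def)
    have Hs: "H \<in> sets M" unfolding H_def by measurable
    have "measure M {\<omega>\<in>space M. -b < X 8 \<omega> \<and> X 8 \<omega> < a}
        \<le> measure M (H \<union> {\<omega>\<in>space M. (\<exists>j\<le>8*2^m. a \<le> X (real j / 2^m) \<omega>) \<and> X 8 \<omega> < a})"
      by (intro finite_measure_mono) (auto simp: H_def not_less)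
    also have "\<dots> \<le> measure M H + measure M {\<omega>\<in>space M. (\<exists>j\<le>8*2^m. a \<le> X (real j / 2^m) \<omega>) \<and> X 8 \<omega> < a}"
      by (rule measure_Un_le) (use Hs in auto)
    also have "\<dots> \<le> measure M H + measure M {\<omega>\<in>space M. a < X 8 \<omega>}"
      using levy[OF BM, of m a] by simp
    finally have "c \<le> measure M H" unfolding c_def by simp
    then have "c * d \<le> measure M H * d" using d by (simp add: mult_right_mono)
    then show ?thesis using GH by simp
  qed
  have Gdec: "decseq G" unfolding decseq_Suc_iff
  proof
    fix m
    show "G (Suc m) \<subseteq> G m"
    proof
      fix \<omega> assume "\<omega> \<in> G (Suc m)"
      then have \<omega>: "\<omega> \<in> space M" "\<forall>j\<le>8*2^Suc m. X (real j / 2^Suc m) \<omega> < a" "-b < X 8 \<omega>"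
        "X (17/2) \<omega> - X 8 \<omega> \<in> {1+b<..}" by (auto simp: G_def)
      have "X (real j / 2^m) \<omega> < a" if j: "j \<le> 8*2^m" for j
      proof -
        have "2 * j \<le> 8 * 2^Suc m" using j by simp
        then have "X (real (2*j) / 2^Suc m) \<omega> < a" using \<omega>(2) by blast
        moreover have "real (2*j) / 2^Suc m = real j / 2^m" by simp
        ultimately show ?thesis by simp
      qed
      then show "\<omega> \<in> G m" using \<omega> by (auto simp: G_def)
    qed
  qed
  have "(\<lambda>m. measure M (G m)) \<longlonglongrightarrow> measure M (\<Inter>m. G m)"
    by (rule finite_Lim_measure_decseq) (use Gs Gdec in auto)
  then have cd: "c * d \<le> measure M (\<Inter>m. G m)"
    by (rule LIMSEQ_le_const) (use Gbound in auto)
  define E where "E = {\<omega>\<in>space M. (\<forall>t\<in>{0..8}. X t \<omega> < 1) \<and> (\<exists>t\<in>{8<..<9}. 1 \<le> X t \<omega>)}"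
  have sub: "(\<Inter>m. G m) \<subseteq> E"
  proof
    fix \<omega> assume \<omega>G: "\<omega> \<in> (\<Inter>m. G m)"
    then have \<omega>: "\<omega> \<in> space M" "-b < X 8 \<omega>" "1 + b < X (17/2) \<omega> - X 8 \<omega>" by (auto simp: G_def)
    have dy: "\<And>m j. j \<le> 8*2^m \<Longrightarrow> X (real j / 2^m) \<omega> < a" using \<omega>G by (auto simp: G_def)
    have "X t \<omega> \<le> a" if t: "t \<in> {0..8}" for t
    proof (rule cont_le_dense[OF bm_cont[OF BM \<omega>(1)]])
      show "0 \<le> t" using t by simp
      fix \<delta> :: real assume "\<delta> > 0"
      then obtain m j where mj: "j \<le> 8 * 2^m" "\<bar>real j / 2^m - t\<bar> < \<delta>" using dyadic_approx[of t \<delta>] t by auto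
      then show "\<exists>q\<ge>0. \<bar>q - t\<bar> < \<delta> \<and> X q \<omega> \<le> a" using dy[OF mj(1)]
        by (intro exI[of _ "real j / 2^m"]) auto
    qed
    then have "\<forall>t\<in>{0..8}. X t \<omega> < 1" by (fastforce simp: a_def)
    moreover have "17/2 \<in> {8<..<9::real}" "1 \<le> X (17/2) \<omega>" using \<omega> by auto
    ultimately show "\<omega> \<in> E" using \<omega>(1) unfolding E_def by blast
  qed
  have "measure M (\<Inter>m. G m) \<le> measure M E"
    by (rule finite_measure_mono[OF sub]) (unfold E_def, rule E_sets[OF BM])
  moreover have "0 < c * d" using c d by simp
  ultimately show ?thesis using cd unfolding E_def by linarith
qed

theorem theorem5p6:
  fixes M :: "'a measure" and X :: "real \<Rightarrow> 'a \<Rightarrow> real"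
    and p \<phi>1 \<phi>2 \<phi>3 \<psi> :: mtl
  assumes BM: "brownian_motion M X"
    and p_def: "p = Atom {1..}"
    and phi1_def: "\<phi>1 = Box {1<..<2} (Conj (Dia {1<..<4} p) (Neg (Dia {1<..<3} p)))"
    and phi2_def: "\<phi>2 = Conj (Dia {1<..<3} \<phi>1)
                      (Conj (Neg (Dia {1<..<2} \<phi>1)) (Neg (Dia {2<..<3} \<phi>1)))"
    and phi3_def: "\<phi>3 = Dia {1<..<2} \<phi>2"
    and psi_def: "\<psi> = Conj (Neg p) (Conj (Neg (Dia {0<..<8} p)) \<phi>3)"
  shows "\<not> ((\<lambda>n. measure M {\<omega> \<in> space M. dsat n (\<lambda>t. X t \<omega>) 0 \<psi>})
            \<longlonglongrightarrow> measure M {\<omega> \<in> space M. csat (\<lambda>t. X t \<omega>) 0 \<psi>})"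
proof
  assume lim: "(\<lambda>n. measure M {\<omega> \<in> space M. dsat n (\<lambda>t. X t \<omega>) 0 \<psi>})
            \<longlonglongrightarrow> measure M {\<omega> \<in> space M. csat (\<lambda>t. X t \<omega>) 0 \<psi>}"
  have phi1': "\<phi>1 = Box {1<..<2} (Conj (Dia {1<..<4} (Atom {1..})) (Neg (Dia {1<..<3} (Atom {1..}))))"
    using phi1_def p_def by simp
  have psi': "\<psi> = Conj (Neg (Atom {1..})) (Conj (Neg (Dia {0<..<8} (Atom {1..})))
           (Dia {1<..<2} (Conj (Dia {1<..<3} \<phi>1) (Conj (Neg (Dia {1<..<2} \<phi>1)) (Neg (Dia {2<..<3} \<phi>1))))))"
    using psi_def phi3_def phi2_def p_def by simp
  have D0: "{\<omega> \<in> space M. dsat n (\<lambda>t. X t \<omega>) 0 \<psi>} = {}" if n: "2 \<le> n" for n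
  proof -
    have "\<not> dsat n (\<lambda>t. X t \<omega>) 0 \<psi>" if \<omega>: "\<omega> \<in> space M" for \<omega>
      unfolding psi' by (rule dsat_psi_false[OF n _ phi1']) (simp add: bm_zero[OF BM \<omega>])
    then show ?thesis by auto
  qed
  have C: "{\<omega> \<in> space M. csat (\<lambda>t. X t \<omega>) 0 \<psi>} =
      {\<omega>\<in>space M. (\<forall>t\<in>{0..8}. X t \<omega> < 1) \<and> (\<exists>t\<in>{8<..<9}. 1 \<le> X t \<omega>)}"
  proof (rule Collect_cong)
    fix \<omega>
    show "(\<omega> \<in> space M \<and> csat (\<lambda>t. X t \<omega>) 0 \<psi>) =
       (\<omega> \<in> space M \<and> (\<forall>t\<in>{0..8}. X t \<omega> < 1) \<and> (\<exists>t\<in>{8<..<9}. 1 \<le> X t \<omega>))"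
      using csat_psi_iff[OF bm_cont[OF BM] phi1', of \<omega>] unfolding psi' by blast
  qed
  have "(\<lambda>n. measure M {\<omega> \<in> space M. dsat n (\<lambda>t. X t \<omega>) 0 \<psi>}) \<longlonglongrightarrow> 0"
  proof (rule tendsto_eventually)
    show "\<forall>\<^sub>F n in sequentially. measure M {\<omega> \<in> space M. dsat n (\<lambda>t. X t \<omega>) 0 \<psi>} = 0"
      by (rule eventually_sequentiallyI[of 2]) (simp only: D0 measure_empty)
  qed
  with lim have "measure M {\<omega> \<in> space M. csat (\<lambda>t. X t \<omega>) 0 \<psi>} = 0"
    by (rule LIMSEQ_unique)
  then show False using E_pos[OF BM] unfolding C by simp
qed

end
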